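(* Let two players have arbitrary (not necessarily identical) valuations $v_1,v_2$ on a finite set of goods $M$. Let $(A_1,A_2)$ be a leximin++ solution for two players who both have valuation $v_1$. - If $v_2(A_1)\ge v_2(A_2)$, give $A_2$ to player 1 and $A_1$ to player 2. - Otherwise, give $A_1$ to player 1 and $A_2$ to player 2. The resulting allocation is EFX with respect to $(v_1,v_2)$.
   Context: A valuation is a function $v:2^M\to\mathbb{R}_{\ge0}$ with $v(\emptyset)=0$ that is monotone: $v(S)\le v(T)$ whenever $S\subseteq T$. An allocation is an ordered partition $(A_1,\dots,A_n)$ of $M$; parts may be empty. It is EFX if for all players $i,j$ and every $g\in A_j$ we have $v_i(A_i)\ge v_i(A_j\setminus\{g\})$. For an allocation $A$, let $X^A$ be the ordering of the players by increasing utility $v_i(A_i)$, with ties broken by increasing player index. The leximin++ comparison is defined as follows. For allocations $A$ and $B$, scan $\ell=1,\dots,n$, and let $i=X^A_\ell$ and $j=X^B_\ell$. - If $v_i(A_i)\ne v_j(B_j)$, stop: $A\prec_{++}B$ holds if and only if $v_i(A_i)<v_j(B_j)$. - Otherwise, if $|A_i|\ne|B_j|$, stop: $A\prec_{++}B$ holds if and only if $|A_i|<|B_j|$. - Otherwise continue to $\ell+1$. If the scan finishes without stopping, then $A\prec_{++}B$ is false. A leximin++ solution is an allocation $A$ that is maximal for this comparison: there is no allocation $B$ with $A\prec_{++}B$. *)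

theory Defs
  imports Complex_Main
begin

text \<open>Players are indexed by 0,...,n-1 (paper's player i+1 is index i).
 Goods form the finite set M. A valuation is given on subsets of M.\<close>

definition valuation :: "'g set \<Rightarrow> ('g set \<Rightarrow> real) \<Rightarrow> bool" where
  "valuation M v \<longleftrightarrow> v {} = 0 \<and> (\<forall>S. S \<subseteq> M \<longrightarrow> v S \<ge> 0)
     \<and> (\<forall>S T. S \<subseteq> T \<and> T \<subseteq> M \<longrightarrow> v S \<le> v T)"

definition is_allocation :: "nat \<Rightarrow> 'g set \<Rightarrow> (nat \<Rightarrow> 'g set) \<Rightarrow> bool" where
  "is_allocation n M A \<longleftrightarrow> (\<Union>i<n. A i) = M
     \<and> (\<forall>i<n. \<forall>j<n. i \<noteq> j \<longrightarrow> A i \<inter> A j = {})"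

definition EFX :: "nat \<Rightarrow> (nat \<Rightarrow> 'g set \<Rightarrow> real) \<Rightarrow> (nat \<Rightarrow> 'g set) \<Rightarrow> bool" where
  "EFX n v A \<longleftrightarrow> (\<forall>i<n. \<forall>j<n. \<forall>g\<in>A j. v i (A i) \<ge> v i (A j - {g}))"

text \<open>X^A: players ordered by increasing utility, ties broken by increasing index
 (sort_key is a stable sort applied to [0..<n], so equal keys keep increasing index order).\<close>
definition order_players :: "nat \<Rightarrow> (nat \<Rightarrow> 'g set \<Rightarrow> real) \<Rightarrow> (nat \<Rightarrow> 'g set) \<Rightarrow> nat list" where
  "order_players n v A = sort_key (\<lambda>i. v i (A i)) [0..<n]"

fun lex_scan :: "(nat \<Rightarrow> 'g set \<Rightarrow> real) \<Rightarrow> (nat \<Rightarrow> 'g set) \<Rightarrow> (nat \<Rightarrow> 'g set)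
                 \<Rightarrow> nat list \<Rightarrow> nat list \<Rightarrow> bool" where
  "lex_scan v A B (i # xs) (j # ys) =
     (if v i (A i) \<noteq> v j (B j) then v i (A i) < v j (B j)
      else if card (A i) \<noteq> card (B j) then card (A i) < card (B j)
      else lex_scan v A B xs ys)"
| "lex_scan v A B _ _ = False"

definition leximinpp_less :: "nat \<Rightarrow> (nat \<Rightarrow> 'g set \<Rightarrow> real) \<Rightarrow> (nat \<Rightarrow> 'g set) \<Rightarrow> (nat \<Rightarrow> 'g set) \<Rightarrow> bool" where
  "leximinpp_less n v A B = lex_scan v A B (order_players n v A) (order_players n v B)"

definition leximinpp_solution :: "nat \<Rightarrow> 'g set \<Rightarrow> (nat \<Rightarrow> 'g set \<Rightarrow> real) \<Rightarrow> (nat \<Rightarrow> 'g set) \<Rightarrow> bool" where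
  "leximinpp_solution n M v A \<longleftrightarrow> is_allocation n M A
     \<and> \<not> (\<exists>B. is_allocation n M B \<and> leximinpp_less n v A B)"

end

theory Submission
  imports Defs
begin

lemma ord2: "order_players 2 v A = (if v 0 (A 0) \<le> v 1 (A 1) then [0,1] else [1,0])"
  by (simp add: order_players_def numeral_2_eq_2)

lemma scan_lt: "v i (A i) < v j (B j) \<Longrightarrow> lex_scan v A B (i#xs) (j#ys)"
  by simp

lemma scan_card: "v i (A i) = v j (B j) \<Longrightarrow> card (A i) < card (B j) \<Longrightarrow> lex_scan v A B (i#xs) (j#ys)"
  by simp

lemma scan_le: "v i (A i) \<le> v j (B j) \<Longrightarrow> card (A i) < card (B j) \<Longrightarrow> lex_scan v A B (i#xs) (j#ys)"
  by (cases "v i (A i) = v j (B j)") (simp_all add: scan_card scan_lt)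

lemma val_mono: "valuation M v \<Longrightarrow> S \<subseteq> T \<Longrightarrow> T \<subseteq> M \<Longrightarrow> v S \<le> v T"
  unfolding valuation_def by auto

lemma efx_core:
  assumes fin: "finite M" and val: "valuation M v" and al: "is_allocation 2 M A"
    and nb: "\<not> (\<exists>B. is_allocation 2 M B \<and> leximinpp_less 2 (\<lambda>_. v) A B)"
    and ij: "i < 2" "j < 2" and g: "g \<in> A j"
  shows "v (A j - {g}) \<le> v (A i)"
proof (cases "i = j")
  case True
  have "A j \<subseteq> M" using al ij unfolding is_allocation_def by blast
  then show ?thesis using val_mono[OF val, of "A j - {g}" "A j"] True by auto
next
  case False
  show ?thesis
  proof (rule ccontr)
    assume c: "\<not> ?thesis"
    have sub: "A i \<subseteq> M" "A j \<subseteq> M" using al ij unfolding is_allocation_def by blast+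
    have gM: "g \<in> M" using g sub by blast
    have gi: "g \<notin> A i" using al ij False g unfolding is_allocation_def by blast
    have v1: "v (A i) < v (A j - {g})" using c by simp
    have v2: "v (A j - {g}) \<le> v (A j)" using val_mono[OF val, of "A j - {g}" "A j"] sub by auto
    have v3: "v (A i) \<le> v (insert g (A i))" using val_mono[OF val, of "A i" "insert g (A i)"] sub gM by auto
    have cd: "card (insert g (A i)) = Suc (card (A i))"
      using gi finite_subset[OF sub(1) fin] by simp
    define B where "B = A(i := insert g (A i), j := A j - {g})"
    have ijc: "(i = 0 \<and> j = 1) \<or> (i = 1 \<and> j = 0)" using ij False by auto
    have u: "A 0 \<union> A 1 = M" and d: "A 0 \<inter> A 1 = {}"
      using al unfolding is_allocation_def by (auto simp: numeral_2_eq_2 lessThan_Suc)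
    have lt2: "\<And>P. (\<forall>k<(2::nat). P k) = (P 0 \<and> P 1)" by (auto simp: less_2_cases_iff)
    have "is_allocation 2 M B"
      unfolding is_allocation_def lessThan_def
    proof (intro conjI)
      have e: "{k. k < (2::nat)} = {0,1}" by auto
      show "(\<Union>k\<in>{k. k < 2}. B k) = M" unfolding e using ijc u g gM
        unfolding B_def by (elim disjE) auto
      show "\<forall>i<2. \<forall>j<2. i \<noteq> j \<longrightarrow> B i \<inter> B j = {}" unfolding lt2 using ijc d g gi
        unfolding B_def by (elim disjE) auto
    qed
    moreover have "leximinpp_less 2 (\<lambda>_. v) A B"
      using ijc
    proof (elim disjE conjE)
      assume a: "i = 0" "j = 1"
      have B0: "B 0 = insert g (A 0)" and B1: "B 1 = A 1 - {g}" unfolding B_def using a by auto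
      have le: "v (A 0) \<le> v (A 1)" using v1 v2 a by simp
      have o: "order_players 2 (\<lambda>_. v) A = [0,1]" unfolding ord2 using le by (simp only: if_True)
      show ?thesis
      proof (cases "v (B 0) \<le> v (B 1)")
        case True
        then have oB: "order_players 2 (\<lambda>_. v) B = [0,1]" unfolding ord2 by (simp only: if_True)
        show ?thesis unfolding leximinpp_less_def o oB
          by (rule scan_le) (use v3 cd B0 a in simp_all)
      next
        case False
        then have oB: "order_players 2 (\<lambda>_. v) B = [1,0]" unfolding ord2 by (simp only: if_False)
        show ?thesis unfolding leximinpp_less_def o oB
          by (rule scan_lt) (use v1 B1 a in simp)
      qed
    next
      assume a: "i = 1" "j = 0"
      have B0: "B 0 = A 0 - {g}" and B1: "B 1 = insert g (A 1)" unfolding B_def using a by auto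
      have le: "\<not> v (A 0) \<le> v (A 1)" using v1 v2 a by simp
      have o: "order_players 2 (\<lambda>_. v) A = [1,0]" unfolding ord2 using le by (simp only: if_False)
      show ?thesis
      proof (cases "v (B 0) \<le> v (B 1)")
        case True
        then have oB: "order_players 2 (\<lambda>_. v) B = [0,1]" unfolding ord2 by (simp only: if_True)
        show ?thesis unfolding leximinpp_less_def o oB
          by (rule scan_lt) (use v1 B0 a in simp)
      next
        case False
        then have oB: "order_players 2 (\<lambda>_. v) B = [1,0]" unfolding ord2 by (simp only: if_False)
        show ?thesis unfolding leximinpp_less_def o oB
          by (rule scan_le) (use v3 cd B1 a in simp_all)
      qed
    qed
    ultimately show False using nb by blast
  qed
qed

theorem theorem4p3:
  fixes M :: "'g set" and v1 v2 :: "'g set \<Rightarrow> real" and A :: "nat \<Rightarrow> 'g set"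
  assumes "finite M"
    and "valuation M v1" and "valuation M v2"
    and "leximinpp_solution 2 M (\<lambda>_. v1) A"
  shows "EFX 2 (\<lambda>i. if i = 0 then v1 else v2)
           (if v2 (A 0) \<ge> v2 (A 1) then (\<lambda>i. if i = 0 then A 1 else A 0)
            else (\<lambda>i. if i = 0 then A 0 else A 1))"
proof -
  have al: "is_allocation 2 M A" and nb: "\<not> (\<exists>B. is_allocation 2 M B \<and> leximinpp_less 2 (\<lambda>_. v1) A B)"
    using assms(4) unfolding leximinpp_solution_def by auto
  have core: "\<And>i j g. i < 2 \<Longrightarrow> j < 2 \<Longrightarrow> g \<in> A j \<Longrightarrow> v1 (A j - {g}) \<le> v1 (A i)"
    using efx_core[OF assms(1) assms(2) al nb] by blast
  have sub: "A 0 \<subseteq> M" "A 1 \<subseteq> M" using al unfolding is_allocation_def by auto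
  have mono2: "\<And>k g. k < 2 \<Longrightarrow> v2 (A k - {g}) \<le> v2 (A k)"
  proof -
    fix k g assume "k < (2::nat)"
    then have "A k \<subseteq> M" using al unfolding is_allocation_def by blast
    then show "v2 (A k - {g}) \<le> v2 (A k)" using val_mono[OF assms(3), of "A k - {g}" "A k"] by auto
  qed
  have c00: "\<And>g. g \<in> A 0 \<Longrightarrow> v1 (A 0 - {g}) \<le> v1 (A 1)" using core[of 1 0] by simp
  have c01: "\<And>g. g \<in> A 1 \<Longrightarrow> v1 (A 1 - {g}) \<le> v1 (A 0)" using core[of 0 1] by simp
  have c0: "\<And>g. g \<in> A 0 \<Longrightarrow> v1 (A 0 - {g}) \<le> v1 (A 0)" using core[of 0 0] by simp
  have c1: "\<And>g. g \<in> A 1 \<Longrightarrow> v1 (A 1 - {g}) \<le> v1 (A 1)" using core[of 1 1] by simp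
  have m0: "\<And>g. v2 (A 0 - {g}) \<le> v2 (A 0)" using mono2[of 0] by simp
  have m1: "\<And>g. v2 (A 1 - {g}) \<le> v2 (A 1)" using mono2[of 1] by simp
  have lt2: "\<And>P. (\<forall>k<(2::nat). P k) = (P 0 \<and> P 1)" by (auto simp: less_2_cases_iff)
  show ?thesis
  proof (cases "v2 (A 0) \<ge> v2 (A 1)")
    case True
    have t: "\<And>g. v2 (A 1 - {g}) \<le> v2 (A 0)" using order_trans[OF m1 True] by simp
    have "EFX 2 (\<lambda>i. if i = 0 then v1 else v2) (\<lambda>i. if i = 0 then A 1 else A 0)"
      unfolding EFX_def lt2 using c00 c01 c0 c1 m0 t by simp
    then show ?thesis using True by simp
  next
    case False
    have f: "v2 (A 0) \<le> v2 (A 1)" using False by simp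
    have t: "\<And>g. v2 (A 0 - {g}) \<le> v2 (A 1)" using order_trans[OF m0 f] by simp
    have "EFX 2 (\<lambda>i. if i = 0 then v1 else v2) (\<lambda>i. if i = 0 then A 0 else A 1)"
      unfolding EFX_def lt2 using c00 c01 c0 c1 m1 t by simp
    then show ?thesis using False by simp
  qed
qed

end
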